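(* Let $n\ge1$, $p\in\,]1,2[$ and $k_3>0$. Define $\phi_1,\phi_2:\mathbb{R}^n\to\mathbb{R}^n$ by $$\phi_1(e_1)=k_3e_1+(e_1^\top e_1)^{\frac{1-p}{3p-2}}e_1,$$ $$\phi_2(e_1)=k_3^2e_1+\frac{2k_3(2p-1)}{3p-2}(e_1^\top e_1)^{\frac{1-p}{3p-2}}e_1+\frac{p}{3p-2}(e_1^\top e_1)^{\frac{2(1-p)}{3p-2}}e_1$$ (with $\phi_1(0)=\phi_2(0)=0$). Let $k_1,k_2>0$ be such that the matrix $\mathcal{A}^*=\begin{bmatrix}-k_1&1\\-k_2&0\end{bmatrix}$ is Hurwitz. Then for the system $$\dot e_1=-k_1\phi_1(e_1)+e_2,\qquad \dot e_2=-k_2\phi_2(e_1),$$ with $(e_1,e_2)\in\mathbb{R}^n\times\mathbb{R}^n$, the state $(e_1^\top,e_2^\top)\in\mathbb{R}^{2n}$ converges to the origin in a fast finite-time stable manner, i.e. the origin is fast finite-time stable.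
   Context: An equilibrium (taken at the origin) of an ODE $\dot x=f(x)$ is finite-time stable if it is Lyapunov stable and every solution starting in a neighbourhood of it reaches it in finite time (settling time) and stays there. It is called fast finite-time stable (FFTS) if, in addition, convergence is governed by a positive definite function $V$ with $\dot V\le-\lambda_1V-\lambda_2V^{\alpha}$ for constants $\lambda_1,\lambda_2>0$, $\alpha\in\,]0,1[$, so that the settling time satisfies $T\le\frac{1}{\lambda_1(1-\alpha)}\ln\frac{\lambda_1V^{1-\alpha}(x_0)+\lambda_2}{\lambda_2}$. *)

theory Defs
  imports "HOL-Analysis.Analysis"
begin

definition is_solution :: "('a::real_normed_vector \<Rightarrow> 'a) \<Rightarrow> (real \<Rightarrow> 'a) \<Rightarrow> bool" where
  "is_solution f x \<longleftrightarrow> (\<forall>t\<ge>0. (x has_vector_derivative f (x t)) (at t within {0..}))"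

definition lyapunov_stable :: "('a::real_normed_vector \<Rightarrow> 'a) \<Rightarrow> bool" where
  "lyapunov_stable f \<longleftrightarrow>
     (\<forall>\<epsilon>>0. \<exists>\<delta>>0. \<forall>x. is_solution f x \<and> norm (x 0) < \<delta> \<longrightarrow> (\<forall>t\<ge>0. norm (x t) < \<epsilon>))"

definition ffts :: "('a::real_normed_vector \<Rightarrow> 'a) \<Rightarrow> bool" where
  "ffts f \<longleftrightarrow> f 0 = 0 \<and> lyapunov_stable f \<and>
    (\<exists>r>0. \<exists>V l1 l2 \<alpha>. l1 > 0 \<and> l2 > 0 \<and> 0 < \<alpha> \<and> \<alpha> < 1 \<and>
       continuous_on (ball 0 r) V \<and> V 0 = (0::real) \<and> (\<forall>z\<in>ball 0 r. z \<noteq> 0 \<longrightarrow> V z > 0) \<and>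
       (\<forall>x. is_solution f x \<and> x 0 \<in> ball 0 r \<longrightarrow>
          (\<forall>t\<ge>0. \<forall>\<epsilon>>0. eventually
              (\<lambda>h. (V (x (t + h)) - V (x t)) / h \<le> - l1 * V (x t) - l2 * V (x t) powr \<alpha> + \<epsilon>)
              (at_right 0)) \<and>
          (\<exists>T\<ge>0. T \<le> 1 / (l1 * (1 - \<alpha>)) * ln ((l1 * V (x 0) powr (1 - \<alpha>) + l2) / l2) \<and>
                 (\<forall>t\<ge>T. x t = 0))))"

definition hurwitz :: "real^'n^'n \<Rightarrow> bool" where
  "hurwitz A \<longleftrightarrow> (\<forall>(\<mu>::complex) v. v \<noteq> 0 \<and> (\<chi> i j. complex_of_real (A $ i $ j)) *v v = \<mu> *s v
                     \<longrightarrow> Re \<mu> < 0)"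

definition phi1 :: "real \<Rightarrow> real \<Rightarrow> real^'n \<Rightarrow> real^'n" where
  "phi1 p k3 e = (if e = 0 then 0 else
     k3 *\<^sub>R e + ((e \<bullet> e) powr ((1 - p) / (3 * p - 2))) *\<^sub>R e)"

definition phi2 :: "real \<Rightarrow> real \<Rightarrow> real^'n \<Rightarrow> real^'n" where
  "phi2 p k3 e = (if e = 0 then 0 else
     k3\<^sup>2 *\<^sub>R e + (2 * k3 * (2 * p - 1) / (3 * p - 2) * (e \<bullet> e) powr ((1 - p) / (3 * p - 2))) *\<^sub>R e
     + (p / (3 * p - 2) * (e \<bullet> e) powr (2 * (1 - p) / (3 * p - 2))) *\<^sub>R e)"

definition err_sys :: "real \<Rightarrow> real \<Rightarrow> real \<Rightarrow> real \<Rightarrow> (real^'n) \<times> (real^'n) \<Rightarrow> (real^'n) \<times> (real^'n)" where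
  "err_sys p k1 k2 k3 = (\<lambda>(e1, e2). (- k1 *\<^sub>R phi1 p k3 e1 + e2, - k2 *\<^sub>R phi2 p k3 e1))"

end

theory Submission
  imports Defs
begin

lemma dini_le:
  fixes f :: "real \<Rightarrow> real"
  assumes ab: "a \<le> b" and cont: "continuous_on {a..b} f"
    and D: "\<And>t \<epsilon>. t \<in> {a..<b} \<Longrightarrow> \<epsilon> > 0 \<Longrightarrow>
         eventually (\<lambda>h. (f (t+h) - f t)/h \<le> c + \<epsilon>) (at_right 0)"
  shows "f b \<le> f a + c*(b-a)"
proof -
  have key: "f b \<le> f a + (c+\<delta>)*(b-a)" if "\<delta> > 0" for \<delta>
  proof -
    define g where "g t = f t - f a - (c+\<delta>)*(t-a)" for t
    have contg: "continuous_on {a..b} g" unfolding g_def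
      by (intro continuous_intros cont)
    define S where "S = {t\<in>{a..b}. \<forall>\<tau>\<in>{a..t}. g \<tau> \<le> 0}"
    have aS: "a \<in> S" using ab by (auto simp: S_def g_def)
    have bddS: "bdd_above S" by (auto simp: S_def bdd_above_def)
    define \<sigma> where "\<sigma> = Sup S"
    have a\<sigma>: "a \<le> \<sigma>" using aS bddS unfolding \<sigma>_def by (meson cSup_upper)
    have \<sigma>b: "\<sigma> \<le> b" unfolding \<sigma>_def using aS by (intro cSup_least) (auto simp: S_def)
    have below: "g \<tau> \<le> 0" if tl: "a \<le> \<tau>" "\<tau> < \<sigma>" for \<tau>
    proof -
      have "S \<noteq> {}" using aS by auto
      then obtain t where "t \<in> S" "\<tau> < t" using less_cSupD[of S \<tau>] tl(2) unfolding \<sigma>_def by blast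
      thus ?thesis using tl by (auto simp: S_def)
    qed
    have g\<sigma>: "g \<sigma> \<le> 0"
    proof (cases "a = \<sigma>")
      case True thus ?thesis by (auto simp: g_def)
    next
      case False
      hence lt: "a < \<sigma>" using a\<sigma> by simp
      have "(g \<longlongrightarrow> g \<sigma>) (at_left \<sigma>)"
      proof -
        have "(g \<longlongrightarrow> g \<sigma>) (at \<sigma> within {a..b})"
          using contg a\<sigma> \<sigma>b by (simp add: continuous_on_def)
        moreover have "at_left \<sigma> \<le> at \<sigma> within {a..b}"
        proof -
          have "at \<sigma> within {a..\<sigma>} = at_left \<sigma>"
            using lt by (intro at_within_Icc_at_left) auto
          moreover have "at \<sigma> within {a..\<sigma>} \<le> at \<sigma> within {a..b}"
            using \<sigma>b by (intro at_le) auto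
          ultimately show ?thesis by simp
        qed
        ultimately show ?thesis using tendsto_mono by blast
      qed
      moreover have "eventually (\<lambda>\<tau>. g \<tau> \<le> 0) (at_left \<sigma>)"
        using lt by (intro eventually_at_leftI[of a]) (auto intro: below)
      ultimately show ?thesis
        by (intro tendsto_upperbound[of g]) auto
    qed
    have \<sigma>S: "\<sigma> \<in> S" using below g\<sigma> a\<sigma> \<sigma>b
      by (auto simp: S_def) (metis antisym_conv2)
    have "\<sigma> = b"
    proof (rule ccontr)
      assume "\<sigma> \<noteq> b"
      hence lt: "\<sigma> < b" using \<sigma>b by simp
      have "eventually (\<lambda>h. (f (\<sigma>+h) - f \<sigma>)/h \<le> c + \<delta>) (at_right 0)"
        using D[of \<sigma> \<delta>] lt a\<sigma> that by auto
      then obtain h0 where h0: "h0 > 0" and h0P: "\<And>h. 0 < h \<Longrightarrow> h < h0 \<Longrightarrow> (f (\<sigma>+h) - f \<sigma>)/h \<le> c + \<delta>"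
        unfolding eventually_at_right_field by auto
      define h1 where "h1 = min (h0/2) (b - \<sigma>)"
      have h1: "0 < h1" "h1 < h0" "\<sigma> + h1 \<le> b" using h0 lt by (auto simp: h1_def)
      have "g \<tau> \<le> 0" if "\<tau> \<in> {a..\<sigma>+h1}" for \<tau>
      proof (cases "\<tau> \<le> \<sigma>")
        case True thus ?thesis using \<sigma>S that by (auto simp: S_def)
      next
        case False
        define h where "h = \<tau> - \<sigma>"
        have hp: "0 < h" "h < h0" using False that h1 by (auto simp: h_def)
        have "(f (\<sigma>+h) - f \<sigma>)/h \<le> c + \<delta>" using h0P hp by auto
        hence "f (\<sigma>+h) - f \<sigma> \<le> (c+\<delta>)*h" using hp by (simp add: divide_le_eq mult.commute)
        thus ?thesis using g\<sigma> unfolding g_def h_def by (simp add: algebra_simps)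
      qed
      hence "\<sigma> + h1 \<in> S" using h1 a\<sigma> by (auto simp: S_def)
      hence "\<sigma> + h1 \<le> \<sigma>" unfolding \<sigma>_def using bddS by (rule cSup_upper)
      thus False using h1 by simp
    qed
    thus ?thesis using g\<sigma> by (simp add: g_def)
  qed
  show ?thesis
  proof (rule field_le_epsilon)
    fix e :: real assume e: "e > 0"
    have "f b \<le> f a + (c + e/(b-a+1))*(b-a)" using key[of "e/(b-a+1)"] e ab by simp
    also have "\<dots> = f a + c*(b-a) + e*((b-a)/(b-a+1))" by (simp add: algebra_simps)
    also have "\<dots> \<le> f a + c*(b-a) + e" using e ab by (simp add: mult_left_le divide_le_eq)
    finally show "f b \<le> f a + c*(b-a) + e" .
  qed
qed

lemma pow_tangent:
  fixes x y r :: real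
  assumes "x > 0" "y \<ge> 0" "0 < r" "r < 1"
  shows "y powr r \<le> x powr r + r * x powr (r - 1) * (y - x)"
proof (cases "y = 0")
  case True
  have "x powr (r-1) * x = x powr r" using assms by (simp add: powr_diff field_simps)
  hence "x powr r + r * x powr (r - 1) * (0 - x) = (1 - r) * x powr r" by (simp add: algebra_simps)
  thus ?thesis using True assms by simp
next
  case False
  hence yp: "y > 0" using assms by simp
  have "y powr r * x powr (1-r) \<le> r*y + (1-r)*x"
    using Youngs_inequality_0[of r "1-r" y x] assms yp by simp
  hence "y powr r * x powr (1-r) * x powr (r-1) \<le> (r*y + (1-r)*x) * x powr (r-1)"
    by (intro mult_right_mono) auto
  moreover have "x powr (1-r) * x powr (r-1) = 1" using assms by (simp flip: powr_add)
  moreover have "x powr (r-1) * x = x powr r" using assms by (simp add: powr_diff field_simps)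
  ultimately show ?thesis by (simp add: algebra_simps)
qed

definition Fset :: "real \<Rightarrow> real \<Rightarrow> real \<Rightarrow> real \<Rightarrow> real" where
  "Fset l1 l2 \<alpha> v = 1/(l1*(1-\<alpha>)) * ln ((l1 * v powr (1-\<alpha>) + l2)/l2)"

lemma Fset_tangent:
  assumes l: "l1 > 0" "l2 > 0" "0 < \<alpha>" "\<alpha> < 1" and xy: "x > 0" "y \<ge> 0"
  shows "Fset l1 l2 \<alpha> y \<le> Fset l1 l2 \<alpha> x + (y - x)/(l1*x + l2*x powr \<alpha>)"
proof -
  define A where "A = l1 * x powr (1-\<alpha>) + l2"
  define B where "B = l1 * y powr (1-\<alpha>) + l2"
  have A: "A > 0" and B: "B > 0" using l xy by (auto simp: A_def B_def intro!: add_nonneg_pos)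
  have "ln (B/l2) - ln (A/l2) = ln (B/A)" using A B l by (simp add: ln_div)
  also have "\<dots> \<le> B/A - 1" using A B by (intro ln_le_minus_one) auto
  also have "\<dots> = l1 * (y powr (1-\<alpha>) - x powr (1-\<alpha>)) / A" using A by (simp add: A_def B_def field_simps)
  also have "\<dots> \<le> l1 * ((1-\<alpha>) * x powr (-\<alpha>) * (y - x)) / A"
    using pow_tangent[of x y "1-\<alpha>"] l xy A by (intro divide_right_mono mult_left_mono) auto
  finally have *: "ln (B/l2) - ln (A/l2) \<le> l1 * ((1-\<alpha>) * x powr (-\<alpha>) * (y - x)) / A" .
  have xa: "x powr \<alpha> * x powr (-\<alpha>) = 1" "x powr \<alpha> * x powr (1-\<alpha>) = x" using xy
    by (simp_all flip: powr_add)
  have "l1*x + l2*x powr \<alpha> = x powr \<alpha> * A" using xa by (simp add: A_def algebra_simps)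
  hence eq: "1/(l1*(1-\<alpha>)) * (l1 * ((1-\<alpha>) * x powr (-\<alpha>) * (y - x)) / A) = (y - x)/(l1*x + l2*x powr \<alpha>)"
    using l A xa xy by (simp add: field_simps)
  have "Fset l1 l2 \<alpha> y - Fset l1 l2 \<alpha> x = 1/(l1*(1-\<alpha>)) * (ln (B/l2) - ln (A/l2))"
    by (simp add: Fset_def A_def B_def algebra_simps)
  also have "\<dots> \<le> 1/(l1*(1-\<alpha>)) * (l1 * ((1-\<alpha>) * x powr (-\<alpha>) * (y - x)) / A)"
    using * l by (intro mult_left_mono) auto
  finally show ?thesis using eq by simp
qed

lemma Fset_pos: assumes "l1 > 0" "l2 > 0" "\<alpha> < 1" "y > 0" shows "Fset l1 l2 \<alpha> y > 0"
proof -
  have "(l1 * y powr (1-\<alpha>) + l2)/l2 > 1" using assms by (simp add: field_simps)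
  hence "ln ((l1 * y powr (1-\<alpha>) + l2)/l2) > 0" by simp
  thus ?thesis using assms unfolding Fset_def by (intro mult_pos_pos) auto
qed

lemma Fset_nonneg: assumes "l1 > 0" "l2 > 0" "\<alpha> < 1" "y \<ge> 0" shows "Fset l1 l2 \<alpha> y \<ge> 0"
proof -
  have "(l1 * y powr (1-\<alpha>) + l2)/l2 \<ge> 1" using assms by (simp add: field_simps)
  hence "ln ((l1 * y powr (1-\<alpha>) + l2)/l2) \<ge> 0" by simp
  thus ?thesis using assms unfolding Fset_def by (intro mult_nonneg_nonneg) auto
qed

lemma settle:
  fixes v :: "real \<Rightarrow> real"
  assumes l: "l1 > 0" "l2 > 0" "0 < \<alpha>" "\<alpha> < 1"
   and cont: "continuous_on {0..} v" and nn: "\<And>t. t \<ge> 0 \<Longrightarrow> v t \<ge> 0"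
   and D: "\<And>t \<epsilon>. t \<ge> 0 \<Longrightarrow> \<epsilon> > 0 \<Longrightarrow>
        eventually (\<lambda>h. (v (t+h) - v t)/h \<le> - l1 * v t - l2 * v t powr \<alpha> + \<epsilon>) (at_right 0)"
  shows settle_mono: "\<And>s t. 0 \<le> s \<Longrightarrow> s \<le> t \<Longrightarrow> v t \<le> v s"
    and settle_zero: "\<And>t. Fset l1 l2 \<alpha> (v 0) \<le> t \<Longrightarrow> v t = 0"
proof -
  show mono: "v t \<le> v s" if st: "0 \<le> s" "s \<le> t" for s t
  proof -
    have "v t \<le> v s + 0 * (t - s)"
    proof (rule dini_le)
      show "continuous_on {s..t} v" using st by (intro continuous_on_subset[OF cont]) auto
      fix \<tau> \<epsilon> :: real assume "\<tau> \<in> {s..<t}" "\<epsilon> > 0"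
      hence "\<tau> \<ge> 0" using st by auto
      have a1: "l1 * v \<tau> \<ge> 0" using nn[OF \<open>\<tau> \<ge> 0\<close>] l by simp
      have a2: "l2 * v \<tau> powr \<alpha> \<ge> 0" using l by simp
      have "- l1 * v \<tau> - l2 * v \<tau> powr \<alpha> + \<epsilon> \<le> 0 + \<epsilon>"
        using a1 a2 by linarith
      show "eventually (\<lambda>h. (v (\<tau>+h) - v \<tau>)/h \<le> 0 + \<epsilon>) (at_right 0)"
      proof (rule eventually_mono[OF D[OF \<open>\<tau> \<ge> 0\<close> \<open>\<epsilon> > 0\<close>]])
        fix h assume "(v (\<tau>+h) - v \<tau>)/h \<le> - l1 * v \<tau> - l2 * v \<tau> powr \<alpha> + \<epsilon>"
        with \<open>- l1 * v \<tau> - l2 * v \<tau> powr \<alpha> + \<epsilon> \<le> 0 + \<epsilon>\<close>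
        show "(v (\<tau>+h) - v \<tau>)/h \<le> 0 + \<epsilon>" by linarith
      qed
    qed (use st in auto)
    thus ?thesis by simp
  qed
  define T0 where "T0 = Fset l1 l2 \<alpha> (v 0)"
  have T0: "T0 \<ge> 0" unfolding T0_def using Fset_nonneg l nn[of 0] by auto
  have vT0: "v T0 = 0"
  proof (rule ccontr)
    assume "v T0 \<noteq> 0"
    hence vpos: "v T0 > 0" using nn[OF T0] by linarith
    have pos: "v t > 0" if "t \<in> {0..T0}" for t using mono[of t T0] that vpos by auto
    define W where "W t = Fset l1 l2 \<alpha> (v t)" for t
    have "W T0 \<le> W 0 + (-1) * (T0 - 0)"
    proof (rule dini_le)
      show "continuous_on {0..T0} W"
        using pos l continuous_on_subset[OF cont, of "{0..T0}"]
      proof -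
        have h1: "v x > 0" "l1 * v x powr (1 - \<alpha>) + l2 > 0" if "x \<in> {0..T0}" for x
        proof -
          show "v x > 0" using pos that by auto
          have "l1 * v x powr (1 - \<alpha>) \<ge> 0" using l by simp
          thus "l1 * v x powr (1 - \<alpha>) + l2 > 0" using l by linarith
        qed
        have cv: "continuous_on {0..T0} v" by (rule continuous_on_subset[OF cont]) auto
        have cF: "continuous_on {0<..} (Fset l1 l2 \<alpha>)"
        proof -
          have "l1 * y powr (1 - \<alpha>) + l2 > 0" for y
          proof -
            have "l1 * y powr (1 - \<alpha>) \<ge> 0" using l by simp
            thus ?thesis using l by linarith
          qed
          thus ?thesis unfolding Fset_def[abs_def] using l
            by (intro continuous_intros) (auto simp: less_imp_neq[symmetric] intro: less_imp_neq[symmetric])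
        qed
        have "continuous_on {0..T0} (\<lambda>t. Fset l1 l2 \<alpha> (v t))"
          by (rule continuous_on_compose2[OF cF cv]) (use h1 in auto)
        thus ?thesis by (simp add: W_def[abs_def])
      qed
      fix t \<epsilon> :: real assume t: "t \<in> {0..<T0}" and e: "\<epsilon> > 0"
      define x where "x = v t"
      define K where "K = l1 * x + l2 * x powr \<alpha>"
      have x: "x > 0" using pos t by (auto simp: x_def)
      have K: "K > 0" using x l by (auto simp: K_def intro!: add_pos_pos)
      have ev: "eventually (\<lambda>h. (v (t+h) - x)/h \<le> - K + \<epsilon> * K) (at_right 0)"
      proof -
        have "\<epsilon> * K > 0" using e K by simp
        from D[OF _ this] t have "eventually (\<lambda>h. (v (t+h) - v t)/h \<le> - l1 * v t - l2 * v t powr \<alpha> + \<epsilon> * K) (at_right 0)" by auto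
        thus ?thesis by (simp add: x_def K_def algebra_simps)
      qed
      have "eventually (\<lambda>h. h > 0) (at_right (0::real))" by (simp add: eventually_at_right_less)
      with ev show "eventually (\<lambda>h. (W (t+h) - W t)/h \<le> -1 + \<epsilon>) (at_right 0)"
      proof eventually_elim
        case (elim h)
        have "W (t+h) \<le> W t + (v (t+h) - x)/K"
          unfolding W_def x_def K_def using Fset_tangent[OF l, of x "v (t+h)"] x nn[of "t+h"] t elim
          by (auto simp: x_def)
        hence "(W (t+h) - W t)/h \<le> ((v (t+h) - x)/K)/h" using elim
          by (intro divide_right_mono) auto
        also have "\<dots> = ((v (t+h) - x)/h)/K" by simp
        also have "\<dots> \<le> (- K + \<epsilon> * K)/K" using elim K by (intro divide_right_mono) auto
        also have "\<dots> = -1 + \<epsilon>" using K by (simp add: field_simps)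
        finally show ?case .
      qed
    qed (use T0 in auto)
    hence "W T0 \<le> 0" unfolding W_def T0_def by simp
    moreover have "W T0 > 0" unfolding W_def using Fset_pos l vpos by auto
    ultimately show False by simp
  qed
  show "v t = 0" if "Fset l1 l2 \<alpha> (v 0) \<le> t" for t
    using mono[of T0 t] vT0 nn[of t] T0 that by (auto simp: T0_def)
qed

lemma shift_filterlim:
  fixes t :: real assumes "t \<ge> 0"
  shows "filterlim (\<lambda>h. t + h) (at t within {0..}) (at_right 0)"
proof -
  have "((\<lambda>h. t + h) \<longlongrightarrow> t + 0) (at_right (0::real))"
    by (intro tendsto_intros)
  moreover have "eventually (\<lambda>h. t + h \<in> {0..} \<and> t + h \<noteq> t) (at_right (0::real))"
    using assms eventually_at_right_less[of 0] by (auto elim!: eventually_mono)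
  ultimately show ?thesis unfolding filterlim_at by simp
qed

lemma hvd_quot:
  fixes f :: "real \<Rightarrow> 'a::real_normed_vector"
  assumes d: "(f has_vector_derivative D) (at t within {0..})" and t: "t \<ge> 0"
  shows "((\<lambda>h. (f (t+h) - f t) /\<^sub>R h) \<longlongrightarrow> D) (at_right 0)"
proof -
  have "((\<lambda>y. (1 / norm(y - t)) *\<^sub>R (f y - (f t + (y - t) *\<^sub>R D))) \<longlongrightarrow> 0) (at t within {0..})"
    using d unfolding has_vector_derivative_def has_derivative_within by auto
  from filterlim_compose[OF this shift_filterlim[OF t]]
  have "((\<lambda>h. (1 / norm h) *\<^sub>R (f (t+h) - (f t + h *\<^sub>R D))) \<longlongrightarrow> 0) (at_right 0)"
    by simp
  hence "((\<lambda>h. (1 / norm h) *\<^sub>R (f (t+h) - (f t + h *\<^sub>R D)) + D) \<longlongrightarrow> 0 + D) (at_right 0)"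
    by (intro tendsto_intros)
  moreover have "eventually (\<lambda>h. (1 / norm h) *\<^sub>R (f (t+h) - (f t + h *\<^sub>R D)) + D = (f (t+h) - f t) /\<^sub>R h) (at_right (0::real))"
    using eventually_at_right_less[of 0]
    by (rule eventually_mono) (auto simp: algebra_simps inverse_eq_divide)
  ultimately show ?thesis by (simp add: tendsto_cong)
qed

lemma deriv_dini:
  fixes f :: "real \<Rightarrow> real"
  assumes d: "(f has_real_derivative D) (at t within {0..})" and t: "t \<ge> 0" and "D \<le> B" "\<epsilon> > 0"
  shows "eventually (\<lambda>h. (f (t+h) - f t)/h \<le> B + \<epsilon>) (at_right 0)"
proof -
  have "((\<lambda>h. (f (t+h) - f t) /\<^sub>R h) \<longlongrightarrow> D) (at_right 0)"
    using d t by (intro hvd_quot) (simp add: has_real_derivative_iff_has_vector_derivative)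
  hence "eventually (\<lambda>h. (f (t+h) - f t) /\<^sub>R h < D + \<epsilon>) (at_right 0)"
    using assms by (intro order_tendstoD) auto
  thus ?thesis by (rule eventually_mono) (use assms in \<open>auto simp: divide_inverse mult.commute\<close>)
qed

lemma hvd_inner:
  fixes u w :: "real \<Rightarrow> 'a::real_inner"
  assumes "(u has_vector_derivative U) (at t within S)" "(w has_vector_derivative W) (at t within S)"
  shows "((\<lambda>\<tau>. u \<tau> \<bullet> w \<tau>) has_real_derivative (u t \<bullet> W + U \<bullet> w t)) (at t within S)"
proof -
  have "((\<lambda>\<tau>. u \<tau> \<bullet> w \<tau>) has_derivative (\<lambda>h. u t \<bullet> (h *\<^sub>R W) + (h *\<^sub>R U) \<bullet> w t)) (at t within S)"
    using assms unfolding has_vector_derivative_def by (intro has_derivative_inner) auto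
  thus ?thesis unfolding has_field_derivative_def
    by (rule has_derivative_eq_rhs) (auto simp: algebra_simps)
qed

definition bb :: "real \<Rightarrow> real" where "bb p = (1-p)/(3*p-2)"
definition aa :: "real \<Rightarrow> real" where "aa p = p/(3*p-2)"
definition mm :: "real \<Rightarrow> real \<Rightarrow> real" where "mm k1 k2 = 2 + 2*k2/k1 + 2*k2"
definition PP :: "real \<Rightarrow> real \<Rightarrow> real" where "PP k1 k2 = (mm k1 k2 + k1)/k2"
definition MM :: "real \<Rightarrow> real \<Rightarrow> real" where "MM k1 k2 = mm k1 k2 + PP k1 k2 + 2"
definition kap :: "real \<Rightarrow> real" where "kap k2 = min k2 1"
definition lam1 :: "real \<Rightarrow> real \<Rightarrow> real \<Rightarrow> real" where "lam1 k1 k2 k3 = 2*kap k2*k3/MM k1 k2"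
definition lam2 :: "real \<Rightarrow> real \<Rightarrow> real \<Rightarrow> real" where "lam2 p k1 k2 = 2*kap k2*aa p / MM k1 k2 powr (1/p)"

lemma aa_bb: "1 < p \<Longrightarrow> aa p = 1 + 2 * bb p"
  by (simp add: aa_def bb_def field_simps)

lemma iden:
  fixes s q z S k1 k2 k3 b m P :: real
  assumes s: "s > 0" and k: "k1 > 0" "k2 > 0" and Pd: "P * k2 = m + k1"
  defines "g \<equiv> k3 + S" and "d \<equiv> k3 + (1 + 2*b)*S"
  defines "ds \<equiv> 2*(q - k1*g * s)"
  defines "dq \<equiv> -k1*g*q + z - k2*(g*d) * s"
  defines "dz \<equiv> -2*k2*(g*d)*q"
  defines "dS \<equiv> b * (S/s) * ds"
  shows "m*(2*g*dS * s + g^2*ds) - 2*(dS*q + g*dq) + P*dz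
       = -2*(m*k1 - k2)*d*g^2 * s - 4*b * (S/s)*q^2 - 2*g*z"
proof -
  have Pe: "P = (m + k1)/k2" using Pd k by (simp add: field_simps)
  show ?thesis unfolding g_def d_def ds_def dq_def dz_def dS_def Pe using s k
    by (simp add: field_simps power2_eq_square)
qed

lemma consts_pos:
  assumes "1 < p" "p < 2" "k1 > 0" "k2 > 0" "k3 > 0"
  shows "bb p < 0" "aa p > 0" "mm k1 k2 \<ge> 2" "PP k1 k2 \<ge> 2" "MM k1 k2 > 0" "kap k2 > 0"
    "kap k2 \<le> k2" "kap k2 \<le> 1" "mm k1 k2 * k1 - k2 \<ge> k2" "PP k1 k2 * k2 = mm k1 k2 + k1"
    "lam1 k1 k2 k3 > 0" "lam2 p k1 k2 > 0" "0 < 1/p" "1/p < 1"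
proof -
  show b: "bb p < 0" using assms by (simp add: bb_def divide_neg_pos)
  show a: "aa p > 0" using assms by (simp add: aa_def)
  have "2*k2/k1 \<ge> 0" "2*k2 \<ge> 0" using assms by auto
  thus m: "mm k1 k2 \<ge> 2" by (simp add: mm_def)
  have "mm k1 k2 \<ge> 2 * k2" using \<open>2*k2/k1 \<ge> 0\<close> by (simp add: mm_def)
  hence "mm k1 k2 + k1 \<ge> 2 * k2" using assms by simp
  thus P: "PP k1 k2 \<ge> 2" using assms by (simp add: PP_def le_divide_eq)
  show M: "MM k1 k2 > 0" using m P by (simp add: MM_def)
  show "kap k2 > 0" "kap k2 \<le> k2" "kap k2 \<le> 1" using assms by (auto simp: kap_def)
  show "mm k1 k2 * k1 - k2 \<ge> k2" using assms by (simp add: mm_def field_simps)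
  show "PP k1 k2 * k2 = mm k1 k2 + k1" using assms by (simp add: PP_def)
  show "lam1 k1 k2 k3 > 0" using assms M by (simp add: lam1_def kap_def)
  show "lam2 p k1 k2 > 0" using assms M a by (simp add: lam2_def kap_def)
  show "0 < 1/p" "1/p < 1" using assms by auto
qed

lemma key_ineq:
  fixes p k1 k2 k3 s q z v :: real
  assumes p: "1 < p" "p < 2" and k: "k1 > 0" "k2 > 0" "k3 > 0"
    and s: "s > 0" and z: "z \<ge> 0" and qsz: "q^2 \<le> s * z"
  defines "S \<equiv> s powr bb p"
  defines "g \<equiv> k3 + S" and "d \<equiv> k3 + aa p * S"
  defines "Y \<equiv> g^2 * s + z"
  assumes v: "0 \<le> v" "v \<le> MM k1 k2 * Y"
  shows "-2*(mm k1 k2 * k1 - k2)*d*g^2 * s - 4*bb p*(S/s)*q^2 - 2*g*z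
     \<le> - lam1 k1 k2 k3 * v - lam2 p k1 k2 * v powr (1/p)"
proof -
  note c = consts_pos[OF p k]
  have Sp: "S > 0" using s by (simp add: S_def)
  have gp: "g > 0" using Sp k by (simp add: g_def)
  have "aa p * S > 0" using Sp c by simp
  hence dp: "d > 0" using k by (simp add: d_def)
  have X0: "g^2 * s \<ge> 0" using s by simp
  have dX2: "0 \<le> d*(g^2 * s)" using mult_nonneg_nonneg[OF less_imp_le[OF dp] X0] .
  hence dX: "0 \<le> d*g^2 * s" by (simp add: mult.assoc)
  have dz: "0 \<le> d*z" using dp z by simp
  have Yp: "Y > 0" using gp s z by (simp add: Y_def add_pos_nonneg)
  have h1: "-2*(mm k1 k2 * k1 - k2)*d*g^2 * s \<le> -2*k2*d*g^2 * s"
  proof -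
    have "k2 * (d*g^2 * s) \<le> (mm k1 k2 * k1 - k2) * (d*g^2 * s)"
      using c dX by (intro mult_right_mono) auto
    thus ?thesis by (simp add: algebra_simps)
  qed
  have h2: "- 4*bb p*(S/s)*q^2 \<le> - 4*bb p*(S/s)*(s * z)"
  proof -
    have f1: "S/s > 0" using Sp s by simp
    have f2: "- 4*bb p \<ge> 0" using c by simp
    have "- 4*bb p*(S/s) \<ge> 0" by (rule mult_nonneg_nonneg[OF f2 less_imp_le[OF f1]])
    hence "(- 4*bb p*(S/s))*q^2 \<le> (- 4*bb p*(S/s))*(s * z)"
      using qsz by (intro mult_left_mono) auto
    thus ?thesis by simp
  qed
  have h3: "- 4*bb p*(S/s)*(s * z) - 2*g*z = -2*d*z"
    using s aa_bb[OF p(1)] by (simp add: d_def g_def field_simps)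
  have h4: "-2*k2*d*g^2 * s - 2*d*z \<le> -2*kap k2*d*Y"
  proof -
    have "kap k2 * (d*(g^2 * s)) \<le> k2 * (d*(g^2 * s))" using c dX2 by (intro mult_right_mono) auto
    moreover have "kap k2 * (d*z) \<le> 1 * (d*z)" using c dz by (intro mult_right_mono) auto
    ultimately show ?thesis by (simp add: Y_def algebra_simps)
  qed
  have LHS: "-2*(mm k1 k2 * k1 - k2)*d*g^2 * s - 4*bb p*(S/s)*q^2 - 2*g*z \<le>
      -2*kap k2*k3*Y - 2*kap k2*aa p*(S*Y)"
    using h1 h2 h3 h4 by (simp add: d_def algebra_simps)
  have "S^2 * s = s powr aa p"
  proof -
    have "S^2 * s = s powr (bb p + bb p + 1)" using s unfolding powr_add by (simp add: S_def power2_eq_square)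
    thus ?thesis using aa_bb[OF p(1)] by (simp add: add.commute)
  qed
  moreover have "S^2 * s \<le> g^2 * s" using Sp k s by (intro mult_right_mono power_mono) (auto simp: g_def)
  ultimately have Ysa: "s powr aa p \<le> Y" using z by (simp add: Y_def)
  have "Y powr (1/p - 1) \<le> (s powr aa p) powr (1/p - 1)"
    using Ysa s p by (intro powr_mono2') (auto simp: field_simps)
  also have "\<dots> = S"
  proof -
    have "aa p * (1/p - 1) = bb p" using p by (simp add: aa_def bb_def field_simps)
    thus ?thesis unfolding S_def powr_powr by simp
  qed
  finally have YS: "Y powr (1/p - 1) \<le> S" .
  have "Y powr (1/p) = Y powr (1/p - 1) * Y"
  proof -
    have "Y powr (1/p) = Y powr ((1/p - 1) + 1)" by simp
    also have "\<dots> = Y powr (1/p - 1) * Y powr 1" by (rule powr_add)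
    finally show ?thesis using Yp by simp
  qed
  also have "\<dots> \<le> S * Y" using YS Yp by (intro mult_right_mono) auto
  finally have h5: "Y powr (1/p) \<le> S * Y" .
  have vY: "v / MM k1 k2 \<le> Y" using v c by (simp add: divide_le_eq mult.commute)
  have h6: "v powr (1/p) / MM k1 k2 powr (1/p) \<le> Y powr (1/p)"
    using powr_mono2[of "1/p" "v / MM k1 k2" Y] vY v c by (simp add: powr_divide)
  have "- lam1 k1 k2 k3 * v = -2*kap k2*k3*(v / MM k1 k2)" by (simp add: lam1_def)
  also have "\<dots> \<ge> -2*kap k2*k3*Y" using vY c k by (intro mult_left_mono_neg) auto
  finally have t1: "-2*kap k2*k3*Y \<le> - lam1 k1 k2 k3 * v" .
  have "- lam2 p k1 k2 * v powr (1/p) = -2*kap k2*aa p*(v powr (1/p) / MM k1 k2 powr (1/p))"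
    by (simp add: lam2_def)
  also have "\<dots> \<ge> -2*kap k2*aa p*(S*Y)" using h5 h6 c by (intro mult_left_mono_neg) auto
  finally have t2: "-2*kap k2*aa p*(S*Y) \<le> - lam2 p k1 k2 * v powr (1/p)" .
  show ?thesis using LHS t1 t2 by linarith
qed

lemma phi1_eq: "phi1 p k3 e = (k3 + (e \<bullet> e) powr bb p) *\<^sub>R e"
  by (simp add: phi1_def bb_def scaleR_add_left)

lemma phi2_eq:
  assumes "1 < p"
  shows "phi2 p k3 e = ((k3 + (e \<bullet> e) powr bb p) * (k3 + aa p * (e \<bullet> e) powr bb p)) *\<^sub>R e"
proof (cases "e = 0")
  case True thus ?thesis by (simp add: phi2_def)
next
  case False
  define S where "S = (e \<bullet> e) powr bb p"
  have S2: "(e \<bullet> e) powr (2 * (1 - p) / (3 * p - 2)) = S * S"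
    unfolding S_def bb_def by (simp flip: powr_add)
  have "k3\<^sup>2 + 2 * k3 * (2 * p - 1) / (3 * p - 2) * S + p / (3 * p - 2) * (S * S)
      = (k3 + S) * (k3 + aa p * S)"
  proof -
    have "3 * p - 2 > 0" using assms by simp
    hence "2 * k3 * (2 * p - 1) / (3 * p - 2) = k3 * (1 + aa p)" by (simp add: aa_def field_simps)
    moreover have "p / (3 * p - 2) = aa p" by (simp add: aa_def)
    ultimately show ?thesis by (simp add: algebra_simps power2_eq_square)
  qed
  thus ?thesis using False unfolding phi2_def S2 S_def[symmetric] bb_def[symmetric]
    by (simp add: scaleR_add_left[symmetric] bb_def S_def)
qed

lemma norm_phi1:
  assumes "1 < p" "k3 > 0"
  shows "norm (phi1 p k3 u) = k3 * norm u + norm u powr aa p"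
proof -
  have "(u \<bullet> u) powr bb p * norm u = norm u powr aa p"
  proof -
    have "u \<bullet> u = norm u powr 2"
      using powr_realpow[of "norm u" 2] by (cases "u = 0") (simp_all add: power2_norm_eq_inner)
    hence "(u \<bullet> u) powr bb p = norm u powr (2 * bb p)" by (simp only: powr_powr)
    hence "(u \<bullet> u) powr bb p * norm u = norm u powr (2 * bb p) * norm u powr 1"
      by simp
    also have "\<dots> = norm u powr (2 * bb p + 1)" by (simp add: powr_add)
    also have "2 * bb p + 1 = aa p" using aa_bb[OF assms(1)] by simp
    finally show ?thesis .
  qed
  moreover have "\<bar>k3 + (u \<bullet> u) powr bb p\<bar> = k3 + (u \<bullet> u) powr bb p" using assms by simp
  ultimately show ?thesis unfolding phi1_eq norm_scaleR by (simp add: algebra_simps)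
qed

definition Vf :: "real \<Rightarrow> real \<Rightarrow> real \<Rightarrow> real \<Rightarrow> (real^'n) \<times> (real^'n) \<Rightarrow> real" where
  "Vf p k1 k2 k3 x = mm k1 k2 * (phi1 p k3 (fst x) \<bullet> phi1 p k3 (fst x))
     - 2 * (phi1 p k3 (fst x) \<bullet> snd x) + PP k1 k2 * (snd x \<bullet> snd x)"

lemma Vf_scalar:
  "Vf p k1 k2 k3 (u, w) = mm k1 k2 * ((k3 + (u \<bullet> u) powr bb p)^2 * (u \<bullet> u))
     - 2 * ((k3 + (u \<bullet> u) powr bb p) * (u \<bullet> w)) + PP k1 k2 * (w \<bullet> w)"
  by (simp add: Vf_def phi1_eq power2_eq_square)

lemma Vf_bounds:
  fixes u w :: "real^'n"
  assumes p: "1 < p" "p < 2" and k: "k1 > 0" "k2 > 0" "k3 > 0"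
  defines "Y \<equiv> phi1 p k3 u \<bullet> phi1 p k3 u + w \<bullet> w"
  shows "Y \<le> Vf p k1 k2 k3 (u, w)" "Vf p k1 k2 k3 (u, w) \<le> MM k1 k2 * Y"
    "k3^2 * (u \<bullet> u) + w \<bullet> w \<le> Y"
    "Y = (k3 + (u \<bullet> u) powr bb p)^2 * (u \<bullet> u) + w \<bullet> w"
proof -
  note c = consts_pos[OF p k]
  define f where "f = phi1 p k3 u"
  have a: "0 \<le> (f - w) \<bullet> (f - w)" "0 \<le> (f + w) \<bullet> (f + w)" by simp_all
  hence cs: "2 * (f \<bullet> w) \<le> f \<bullet> f + w \<bullet> w" "- 2 * (f \<bullet> w) \<le> f \<bullet> f + w \<bullet> w"
    by (simp_all add: inner_diff_left inner_diff_right inner_add_left inner_add_right inner_commute)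
  have ff: "f \<bullet> f \<ge> 0" "w \<bullet> w \<ge> 0" by simp_all
  have Veq: "Vf p k1 k2 k3 (u,w) = mm k1 k2 * (f \<bullet> f) - 2 * (f \<bullet> w) + PP k1 k2 * (w \<bullet> w)"
    by (simp add: Vf_def f_def)
  have Yf: "Y = f \<bullet> f + w \<bullet> w" by (simp add: Y_def f_def)
  have "mm k1 k2 * (f \<bullet> f) \<ge> 2 * (f \<bullet> f)" using c ff by (intro mult_right_mono) auto
  moreover have "PP k1 k2 * (w \<bullet> w) \<ge> 2 * (w \<bullet> w)" using c ff by (intro mult_right_mono) auto
  ultimately show "Y \<le> Vf p k1 k2 k3 (u, w)" using cs unfolding Veq Yf by linarith
  have "mm k1 k2 * (f \<bullet> f) \<le> (mm k1 k2 + PP k1 k2 + 2) * (f \<bullet> f)" using c ff by (intro mult_right_mono) auto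
  moreover have "PP k1 k2 * (w \<bullet> w) \<le> (mm k1 k2 + PP k1 k2 + 2) * (w \<bullet> w)" using c ff by (intro mult_right_mono) auto
  moreover have "f \<bullet> f + w \<bullet> w \<le> (mm k1 k2 + PP k1 k2 + 2) * (f \<bullet> f + w \<bullet> w) - (mm k1 k2 + PP k1 k2 + 1) * (f \<bullet> f + w \<bullet> w)"
    by (simp add: algebra_simps)
  moreover have "PP k1 k2 * (f \<bullet> f) \<ge> 0" "mm k1 k2 * (w \<bullet> w) \<ge> 0" using c ff by simp_all
  ultimately show "Vf p k1 k2 k3 (u, w) \<le> MM k1 k2 * Y" using cs unfolding Veq Yf MM_def
    by (simp add: algebra_simps)
  show Yeq: "Y = (k3 + (u \<bullet> u) powr bb p)^2 * (u \<bullet> u) + w \<bullet> w"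
    by (simp add: Y_def phi1_eq power2_eq_square)
  have "k3^2 \<le> (k3 + (u \<bullet> u) powr bb p)^2" using k by (intro power_mono) auto
  hence "k3^2 * (u \<bullet> u) \<le> (k3 + (u \<bullet> u) powr bb p)^2 * (u \<bullet> u)" by (intro mult_right_mono) auto
  thus "k3^2 * (u \<bullet> u) + w \<bullet> w \<le> Y" unfolding Yeq by simp
qed

lemma cont_phi1:
  assumes p: "1 < p" "p < 2" and k3: "k3 > 0"
  shows "continuous_on UNIV (phi1 p k3 :: real^'n \<Rightarrow> real^'n)"
proof -
  have "isCont (phi1 p k3) e" for e :: "real^'n"
  proof (cases "e = 0")
    case False
    hence "e \<bullet> e \<noteq> 0" by simp
    thus ?thesis unfolding phi1_eq[abs_def] by (intro continuous_intros) auto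
  next
    case True
    have b: "bb p + 1/2 > 0" using p by (simp add: bb_def field_simps)
    have "((\<lambda>x::real^'n. k3 * norm x + (x \<bullet> x) powr (bb p + 1/2)) \<longlongrightarrow> k3 * norm (0::real^'n) + 0) (at 0)"
      by (intro tendsto_intros tendsto_zero_powrI[OF _ _ _ b]) (auto intro!: tendsto_eq_intros)
    hence lim: "((\<lambda>x::real^'n. k3 * norm x + (x \<bullet> x) powr (bb p + 1/2)) \<longlongrightarrow> 0) (at 0)" by simp
    have "((phi1 p k3) \<longlongrightarrow> 0) (at (0::real^'n))"
    proof (rule Lim_null_comparison[OF _ lim], rule always_eventually, rule allI)
      fix x :: "real^'n"
      have "norm x = (x \<bullet> x) powr (1/2)" by (simp add: norm_eq_sqrt_inner powr_half_sqrt)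
      hence "(x \<bullet> x) powr bb p * norm x = (x \<bullet> x) powr (bb p + 1/2)" by (simp add: powr_add)
      moreover have "norm (phi1 p k3 x) \<le> \<bar>k3\<bar> * norm x + (x \<bullet> x) powr bb p * norm x"
        unfolding phi1_eq by (simp add: scaleR_add_left norm_triangle_le)
      ultimately show "norm (phi1 p k3 x) \<le> k3 * norm x + (x \<bullet> x) powr (bb p + 1/2)"
        using k3 by simp
    qed
    thus ?thesis using True unfolding isCont_def by (simp add: phi1_def)
  qed
  thus ?thesis by (simp add: continuous_on_eq_continuous_at)
qed

lemma cont_Vf:
  assumes p: "1 < p" "p < 2" and k3: "k3 > 0"
  shows "continuous_on UNIV (Vf p k1 k2 k3 :: (real^'n) \<times> (real^'n) \<Rightarrow> real)"
proof -
  have c: "continuous_on UNIV (\<lambda>x::(real^'n) \<times> (real^'n). phi1 p k3 (fst x))"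
    by (rule continuous_on_compose2[OF cont_phi1[OF p k3] continuous_on_fst[OF continuous_on_id]]) auto
  show ?thesis unfolding Vf_def[abs_def]
    by (intro continuous_intros c)
qed

lemma sol_deriv:
  assumes sol: "is_solution (err_sys p k1 k2 k3) x" and t: "t \<ge> 0"
  shows "((\<lambda>\<tau>. fst (x \<tau>)) has_vector_derivative (- k1 *\<^sub>R phi1 p k3 (fst (x t)) + snd (x t))) (at t within {0..})"
    and "((\<lambda>\<tau>. snd (x \<tau>)) has_vector_derivative (- k2 *\<^sub>R phi2 p k3 (fst (x t)))) (at t within {0..})"
proof -
  have d: "(x has_vector_derivative err_sys p k1 k2 k3 (x t)) (at t within {0..})"
    using sol t unfolding is_solution_def by auto
  have e: "err_sys p k1 k2 k3 (x t) = (- k1 *\<^sub>R phi1 p k3 (fst (x t)) + snd (x t), - k2 *\<^sub>R phi2 p k3 (fst (x t)))"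
    by (simp add: err_sys_def split_beta)
  have "((\<lambda>\<tau>. fst (x \<tau>)) has_derivative (\<lambda>h. fst (h *\<^sub>R err_sys p k1 k2 k3 (x t)))) (at t within {0..})"
    using d unfolding has_vector_derivative_def by (intro has_derivative_fst)
  thus "((\<lambda>\<tau>. fst (x \<tau>)) has_vector_derivative (- k1 *\<^sub>R phi1 p k3 (fst (x t)) + snd (x t))) (at t within {0..})"
    unfolding has_vector_derivative_def e by simp
  have "((\<lambda>\<tau>. snd (x \<tau>)) has_derivative (\<lambda>h. snd (h *\<^sub>R err_sys p k1 k2 k3 (x t)))) (at t within {0..})"
    using d unfolding has_vector_derivative_def by (intro has_derivative_snd)
  thus "((\<lambda>\<tau>. snd (x \<tau>)) has_vector_derivative (- k2 *\<^sub>R phi2 p k3 (fst (x t)))) (at t within {0..})"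
    unfolding has_vector_derivative_def e by simp
qed

lemma dini_C:
  fixes x :: "real \<Rightarrow> (real^'n) \<times> (real^'n)"
  assumes p: "1 < p" "p < 2" and k: "k1 > 0" "k2 > 0" "k3 > 0"
    and sol: "is_solution (err_sys p k1 k2 k3) x" and t: "t \<ge> 0" and u0: "fst (x t) \<noteq> 0"
    and e: "\<epsilon> > 0"
  shows "eventually (\<lambda>h. (Vf p k1 k2 k3 (x (t+h)) - Vf p k1 k2 k3 (x t))/h
     \<le> - lam1 k1 k2 k3 * Vf p k1 k2 k3 (x t) - lam2 p k1 k2 * Vf p k1 k2 k3 (x t) powr (1/p) + \<epsilon>) (at_right 0)"
proof -
  define u where "u = (\<lambda>\<tau>. fst (x \<tau>))"
  define w where "w = (\<lambda>\<tau>. snd (x \<tau>))"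
  define s where "s = (\<lambda>\<tau>. u \<tau> \<bullet> u \<tau>)"
  define q where "q = (\<lambda>\<tau>. u \<tau> \<bullet> w \<tau>)"
  define z where "z = (\<lambda>\<tau>. w \<tau> \<bullet> w \<tau>)"
  define S where "S = (\<lambda>\<tau>. s \<tau> powr bb p)"
  define g0 where "g0 = k3 + S t"
  define d0 where "d0 = k3 + aa p * S t"
  define U where "U = - k1 *\<^sub>R phi1 p k3 (u t) + w t"
  define W where "W = - k2 *\<^sub>R phi2 p k3 (u t)"
  have du: "(u has_vector_derivative U) (at t within {0..})"
    using sol_deriv(1)[OF sol t] by (simp add: u_def w_def U_def)
  have dw: "(w has_vector_derivative W) (at t within {0..})"
    using sol_deriv(2)[OF sol t] by (simp add: u_def w_def W_def)
  have sp: "s t > 0" using u0 by (simp add: s_def u_def)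
  have ph1: "phi1 p k3 (u t) = g0 *\<^sub>R u t" by (simp add: phi1_eq g0_def S_def s_def)
  have ph2: "phi2 p k3 (u t) = (g0 * d0) *\<^sub>R u t" by (simp add: phi2_eq[OF p(1)] g0_def d0_def S_def s_def)
  define Ds where "Ds = 2 * (q t - k1 * g0 * s t)"
  define Dq where "Dq = - k1 * g0 * q t + z t - k2 * (g0 * d0) * s t"
  define Dz where "Dz = - 2 * k2 * (g0 * d0) * q t"
  define DS where "DS = bb p * (S t / s t) * Ds"
  have ds: "(s has_real_derivative Ds) (at t within {0..})"
  proof -
    have "(s has_real_derivative (u t \<bullet> U + U \<bullet> u t)) (at t within {0..})"
      unfolding s_def by (rule hvd_inner[OF du du])
    moreover have "u t \<bullet> U + U \<bullet> u t = Ds"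
      by (simp add: U_def ph1 Ds_def inner_add_left inner_add_right inner_commute s_def q_def algebra_simps)
    ultimately show ?thesis by simp
  qed
  have dq: "(q has_real_derivative Dq) (at t within {0..})"
  proof -
    have "(q has_real_derivative (u t \<bullet> W + U \<bullet> w t)) (at t within {0..})"
      unfolding q_def by (rule hvd_inner[OF du dw])
    moreover have "u t \<bullet> W + U \<bullet> w t = Dq"
      by (simp add: U_def W_def ph1 ph2 Dq_def inner_add_left inner_add_right inner_commute s_def q_def z_def algebra_simps)
    ultimately show ?thesis by simp
  qed
  have dz: "(z has_real_derivative Dz) (at t within {0..})"
  proof -
    have "(z has_real_derivative (w t \<bullet> W + W \<bullet> w t)) (at t within {0..})"
      unfolding z_def by (rule hvd_inner[OF dw dw])
    moreover have "w t \<bullet> W + W \<bullet> w t = Dz"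
      by (simp add: W_def ph2 Dz_def inner_add_left inner_add_right inner_commute s_def q_def z_def algebra_simps)
    ultimately show ?thesis by simp
  qed
  have dS: "(S has_real_derivative DS) (at t within {0..})"
  proof -
    have "((\<lambda>\<tau>. s \<tau> powr bb p) has_real_derivative (bb p * s t powr (bb p - 1) * Ds)) (at t within {0..})"
      using DERIV_chain2[OF has_real_derivative_powr[OF sp] ds] by simp
    moreover have "s t powr (bb p - 1) = S t / s t" using sp by (simp add: S_def powr_diff)
    ultimately show ?thesis by (simp add: S_def DS_def)
  qed
  define v where "v = (\<lambda>\<tau>. mm k1 k2 * ((k3 + S \<tau>)^2 * s \<tau>) - 2 * ((k3 + S \<tau>) * q \<tau>) + PP k1 k2 * z \<tau>)"
  have vV: "Vf p k1 k2 k3 (x \<tau>) = v \<tau>" for \<tau>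
  proof -
    have "x \<tau> = (u \<tau>, w \<tau>)" by (simp add: u_def w_def)
    thus ?thesis by (simp add: Vf_scalar v_def S_def s_def q_def z_def)
  qed
  define D where "D = mm k1 k2 * (2 * (k3 + S t) * DS * s t + (k3 + S t)^2 * Ds) - 2 * (DS * q t + (k3 + S t) * Dq) + PP k1 k2 * Dz"
  have dv: "(v has_real_derivative D) (at t within {0..})"
    unfolding v_def D_def
    by (rule derivative_eq_intros ds dq dz dS refl | simp)+
  have aab: "aa p = 1 + 2 * bb p" by (rule aa_bb[OF p(1)])
  have Deq: "D = -2*(mm k1 k2 * k1 - k2)*d0*g0^2 * s t - 4*bb p*(S t/s t)*(q t)^2 - 2*g0*z t"
    unfolding D_def DS_def Ds_def Dq_def Dz_def d0_def g0_def aab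
    by (rule iden[OF sp k(1,2) consts_pos(10)[OF p k]])
  have qsz: "(q t)^2 \<le> s t * z t" unfolding q_def s_def z_def by (rule Cauchy_Schwarz_ineq)
  have vb: "0 \<le> v t" "v t \<le> MM k1 k2 * ((k3 + s t powr bb p)^2 * s t + z t)"
  proof -
    have n: "0 \<le> k3^2 * (u t \<bullet> u t) + w t \<bullet> w t" by simp
    note B = Vf_bounds[OF p k, of "u t" "w t"]
    have xt: "x t = (u t, w t)" by (simp add: u_def w_def)
    have "0 \<le> phi1 p k3 (u t) \<bullet> phi1 p k3 (u t) + w t \<bullet> w t" by simp
    moreover have "Vf p k1 k2 k3 (u t, w t) = v t" using vV[of t] xt by simp
    ultimately show "0 \<le> v t" using B(1) by linarith
    show "v t \<le> MM k1 k2 * ((k3 + s t powr bb p)^2 * s t + z t)"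
      using B(2,4) vV[of t] xt unfolding s_def z_def by simp
  qed
  have "D \<le> - lam1 k1 k2 k3 * v t - lam2 p k1 k2 * v t powr (1/p)"
    unfolding Deq d0_def g0_def S_def
    by (rule key_ineq[OF p k sp _ qsz vb]) (simp add: z_def)
  moreover have "(\<lambda>\<tau>. Vf p k1 k2 k3 (x \<tau>)) = v" using vV by auto
  ultimately show ?thesis using deriv_dini[OF dv t _ e] vV by simp
qed

lemma Y_small:
  fixes u w :: "real^'n"
  assumes p: "1 < p" "p < 2" and k3: "k3 > 0" and r: "norm u \<le> \<rho>" "norm w \<le> \<rho>" "\<rho> \<le> 1"
  shows "phi1 p k3 u \<bullet> phi1 p k3 u + w \<bullet> w \<le> (2 * k3^2 + 3) * \<rho>"
proof -
  have r0: "\<rho> \<ge> 0" using r norm_ge_zero[of u] by linarith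
  have a: "aa p > 0" "2 * aa p \<ge> 1" using p by (auto simp: aa_def field_simps)
  have "norm u powr aa p \<le> \<rho> powr aa p" using r a by (intro powr_mono2) auto
  hence n1: "norm (phi1 p k3 u) \<le> k3 * \<rho> + \<rho> powr aa p"
    using norm_phi1[OF p(1) k3, of u] r k3 by (simp add: mult_left_mono add_mono)
  have "norm (phi1 p k3 u)^2 \<le> (k3 * \<rho> + \<rho> powr aa p)^2" using n1 by (intro power_mono) auto
  also have "\<dots> \<le> 2 * (k3 * \<rho>)^2 + 2 * (\<rho> powr aa p)^2"
    using zero_le_power2[of "k3 * \<rho> - \<rho> powr aa p"] by (simp add: power2_eq_square algebra_simps)
  also have "(\<rho> powr aa p)^2 = \<rho> powr (2 * aa p)" using r0
    by (simp add: power2_eq_square flip: powr_add)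
  also have "\<rho> powr (2 * aa p) \<le> \<rho> powr 1" using r0 r a by (intro powr_mono') auto
  also have "\<rho> powr 1 = \<rho>" using r0 by simp
  also have "(k3 * \<rho>)^2 = k3^2 * (\<rho> * \<rho>)" by (simp add: power2_eq_square)
  also have "\<rho> * \<rho> \<le> \<rho>" using r0 r by (simp add: mult_left_le)
  finally have A: "phi1 p k3 u \<bullet> phi1 p k3 u \<le> 2 * k3^2 * \<rho> + 2 * \<rho>"
    using k3 by (simp add: power2_norm_eq_inner[symmetric] mult_left_mono)
  have "w \<bullet> w = norm w ^ 2" by (simp add: power2_norm_eq_inner)
  also have "\<dots> \<le> \<rho>^2" using r by (intro power_mono) auto
  also have "\<dots> \<le> \<rho>" using r0 r by (simp add: power2_eq_square mult_left_le)
  finally show ?thesis using A by (simp add: algebra_simps)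
qed

lemma dini_E:
  fixes x :: "real \<Rightarrow> (real^'n) \<times> (real^'n)"
  assumes p: "1 < p" "p < 2" and k: "k1 > 0" "k2 > 0" "k3 > 0"
    and sol: "is_solution (err_sys p k1 k2 k3) x" and t: "t \<ge> 0" and x0: "x t = 0"
    and e: "\<epsilon> > 0"
  shows "eventually (\<lambda>h. (Vf p k1 k2 k3 (x (t+h)) - Vf p k1 k2 k3 (x t))/h
     \<le> - lam1 k1 k2 k3 * Vf p k1 k2 k3 (x t) - lam2 p k1 k2 * Vf p k1 k2 k3 (x t) powr (1/p) + \<epsilon>) (at_right 0)"
proof -
  note c = consts_pos[OF p k]
  have V0: "Vf p k1 k2 k3 (x t) = 0" using x0 by (simp add: Vf_def phi1_def zero_prod_def)
  have d: "(x has_vector_derivative err_sys p k1 k2 k3 (x t)) (at t within {0..})"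
    using sol t unfolding is_solution_def by auto
  have f0: "err_sys p k1 k2 k3 (x t) = 0" using x0
    by (simp add: err_sys_def phi1_def phi2_def zero_prod_def)
  have lim: "((\<lambda>h. (x (t+h) - x t) /\<^sub>R h) \<longlongrightarrow> 0) (at_right 0)"
    using hvd_quot[OF d t] f0 by simp
  define C where "C = MM k1 k2 * (2 * k3^2 + 3)"
  have "2 * k3^2 + 3 > 0" by (simp add: add_nonneg_pos)
  hence C: "C > 0" using c unfolding C_def by (intro mult_pos_pos) auto
  define \<eta> where "\<eta> = min 1 (\<epsilon> / C)"
  have \<eta>: "\<eta> > 0" "\<eta> \<le> 1" "C * \<eta> \<le> \<epsilon>" using C e by (auto simp: \<eta>_def min_def field_simps)
  have ev1: "eventually (\<lambda>h. norm ((x (t+h) - x t) /\<^sub>R h) < \<eta>) (at_right 0)"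
    using lim \<eta> by (simp add: tendsto_iff dist_norm)
  have ev2: "eventually (\<lambda>h. 0 < h \<and> h < (1::real)) (at_right 0)"
    by (rule eventually_at_rightI[of 0 1]) auto
  show ?thesis using ev1 ev2
  proof eventually_elim
    case (elim h)
    hence hp: "h > 0" "h < 1" by auto
    have "norm (x (t+h)) / h < \<eta>" using elim x0 hp by (simp add: divide_inverse mult.commute)
    hence nx: "norm (x (t+h)) \<le> \<eta> * h" using hp by (simp add: divide_less_eq)
    define u where "u = fst (x (t+h))"
    define w where "w = snd (x (t+h))"
    have xe: "x (t+h) = (u, w)" by (simp add: u_def w_def)
    have nu: "norm u \<le> \<eta> * h" using nx norm_fst_le[of u w] xe by simp
    have nw: "norm w \<le> \<eta> * h" using nx norm_snd_le[of w u] xe by simp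
    have r1: "\<eta> * h \<le> 1" using \<eta> hp by (simp add: mult_le_one)
    have "Vf p k1 k2 k3 (x (t+h)) \<le> MM k1 k2 * ((2 * k3^2 + 3) * (\<eta> * h))"
    proof -
      have "MM k1 k2 * (phi1 p k3 u \<bullet> phi1 p k3 u + w \<bullet> w) \<le> MM k1 k2 * ((2 * k3^2 + 3) * (\<eta> * h))"
        using Y_small[OF p k(3) nu nw r1] c by (intro mult_left_mono) auto
      thus ?thesis using Vf_bounds(2)[OF p k, of u w] xe by simp
    qed
    hence "Vf p k1 k2 k3 (x (t+h)) / h \<le> C * \<eta>" using hp by (simp add: C_def divide_le_eq algebra_simps)
    thus ?case using V0 \<eta> by simp
  qed
qed

lemma powr_neg_at_top:
  fixes b :: real assumes "b < 0"
  shows "eventually (\<lambda>h. N \<le> h powr b) (at_right 0)"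
proof -
  have "((\<lambda>h::real. h powr (-b)) \<longlongrightarrow> 0) (at_right 0)"
    using assms by (intro tendsto_zero_powrI[of _ _ _ "-b"]) (auto intro!: tendsto_ident_at eventually_at_rightI[of 0 1])
  moreover have "eventually (\<lambda>h::real. 0 < h powr (-b)) (at_right 0)"
    by (rule eventually_at_rightI[of 0 1]) auto
  ultimately have "filterlim (\<lambda>h. inverse (h powr (-b))) at_top (at_right (0::real))"
    by (rule filterlim_inverse_at_top)
  hence "eventually (\<lambda>h. N \<le> inverse (h powr (-b))) (at_right (0::real))"
    by (simp add: filterlim_at_top)
  moreover have "eventually (\<lambda>h::real. 0 < h) (at_right 0)" by (rule eventually_at_rightI[of 0 1]) auto
  ultimately show ?thesis
    by eventually_elim (simp add: powr_minus)
qed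

lemma dini_D:
  fixes x :: "real \<Rightarrow> (real^'n) \<times> (real^'n)"
  assumes p: "1 < p" "p < 2" and k: "k1 > 0" "k2 > 0" "k3 > 0"
    and sol: "is_solution (err_sys p k1 k2 k3) x" and t: "t \<ge> 0" and u0: "fst (x t) = 0"
    and w0: "snd (x t) \<noteq> 0"
  shows "eventually (\<lambda>h. (Vf p k1 k2 k3 (x (t+h)) - Vf p k1 k2 k3 (x t))/h \<le> R) (at_right 0)"
proof -
  note cc = consts_pos[OF p k]
  define u where "u = (\<lambda>\<tau>. fst (x \<tau>))"
  define w where "w = (\<lambda>\<tau>. snd (x \<tau>))"
  define c where "c = norm (w t)"
  have c: "c > 0" using w0 by (simp add: c_def w_def)
  have ut: "u t = 0" using u0 by (simp add: u_def)
  have V0: "Vf p k1 k2 k3 (x t) = PP k1 k2 * (w t \<bullet> w t)"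
  proof -
    have "x t = (0, w t)" using u0 by (simp add: w_def prod_eq_iff)
    thus ?thesis by (simp add: Vf_def phi1_def)
  qed
  have du: "(u has_vector_derivative w t) (at t within {0..})"
    using sol_deriv(1)[OF sol t] u0 by (simp add: u_def w_def phi1_def)
  have dw: "(w has_vector_derivative 0) (at t within {0..})"
    using sol_deriv(2)[OF sol t] u0 by (simp add: u_def w_def phi2_def)
  have lu: "((\<lambda>h. u (t+h) /\<^sub>R h) \<longlongrightarrow> w t) (at_right 0)"
    using hvd_quot[OF du t] ut by simp
  have lw: "((\<lambda>h. (w (t+h) - w t) /\<^sub>R h) \<longlongrightarrow> 0) (at_right 0)"
    using hvd_quot[OF dw t] by simp
  have E1: "eventually (\<lambda>h. norm (u (t+h) /\<^sub>R h - w t) < c/4) (at_right 0)"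
  proof -
    have "c/4 > 0" using c by simp
    thus ?thesis using lu unfolding tendsto_iff dist_norm by blast
  qed
  have E2: "eventually (\<lambda>h. norm ((w (t+h) - w t) /\<^sub>R h) < 1) (at_right 0)"
    using lw by (simp add: tendsto_iff dist_norm)
  define h1 where "h1 = min 1 (min (c/8) (1/(2*c)))"
  have h1: "h1 > 0" using c by (simp add: h1_def)
  have E3: "eventually (\<lambda>h. 0 < h \<and> h < h1) (at_right 0)"
    using h1 by (intro eventually_at_rightI[of 0 h1]) auto
  define K where "K = mm k1 k2 * ((2 * k3^2 + 3) * (2 * c)) + PP k1 k2 * (2 * c + 1)"
  define L where "L = c^2 / 2 * (2 * c) powr (2 * bb p)"
  have L: "L > 0" using c by (simp add: L_def)
  have E4: "eventually (\<lambda>h. \<bar>K - R\<bar> / L \<le> h powr (2 * bb p)) (at_right 0)"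
    using cc by (intro powr_neg_at_top) auto
  show ?thesis using E1 E2 E3 E4
  proof eventually_elim
    case (elim h)
    hence hp: "0 < h" "h < h1" by auto
    define y where "y = u (t+h)"
    define wv where "wv = w (t+h)"
    have xe: "x (t+h) = (y, wv)" by (simp add: y_def wv_def u_def w_def)
    define \<rho> where "\<rho> = 2 * c * h"
    have \<rho>1: "\<rho> \<le> 1" "\<rho> > 0" using hp c by (auto simp: \<rho>_def h1_def field_simps)
    have n1: "norm (y /\<^sub>R h - w t) < c/4" using elim by (simp add: y_def)
    have "norm (y /\<^sub>R h) \<le> norm (y /\<^sub>R h - w t) + norm (w t)"
      using norm_triangle_ineq[of "y /\<^sub>R h - w t" "w t"] by simp
    hence "norm (y /\<^sub>R h) \<le> 2 * c" using n1 c unfolding c_def by linarith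
    hence "norm y / h \<le> 2 * c" using hp by (simp add: divide_inverse mult.commute)
    hence ny: "norm y \<le> \<rho>" using hp by (simp add: \<rho>_def divide_le_eq mult.commute)
    have "(y /\<^sub>R h) \<bullet> w t = w t \<bullet> w t + (y /\<^sub>R h - w t) \<bullet> w t" by (simp add: inner_diff_left)
    moreover have "\<bar>(y /\<^sub>R h - w t) \<bullet> w t\<bar> \<le> c/4 * c"
      using Cauchy_Schwarz_ineq2[of "y /\<^sub>R h - w t" "w t"] n1 c
      by (smt (verit, best) c_def mult_right_mono norm_ge_zero)
    moreover have "w t \<bullet> w t = c^2" by (simp add: c_def power2_norm_eq_inner)
    ultimately have "(y /\<^sub>R h) \<bullet> w t \<ge> 3/4 * c^2" by (simp add: power2_eq_square)
    hence yw0: "y \<bullet> w t \<ge> 3/4 * c^2 * h" using hp by (simp add: field_simps)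
    have "inverse h * norm (wv - w t) < 1" using elim hp by (simp add: wv_def)
    hence "norm (wv - w t) / h < 1" by (simp add: divide_inverse mult.commute)
    hence n2: "norm (wv - w t) \<le> h" using hp by (simp add: divide_less_eq)
    have "\<bar>y \<bullet> (wv - w t)\<bar> \<le> \<rho> * h"
      using Cauchy_Schwarz_ineq2[of y "wv - w t"] ny n2 \<rho>1
      by (smt (verit, best) mult_mono norm_ge_zero)
    moreover have "\<rho> * h \<le> 1/4 * c^2 * h" using hp c by (simp add: \<rho>_def h1_def power2_eq_square field_simps)
    moreover have "y \<bullet> wv = y \<bullet> w t + y \<bullet> (wv - w t)" by (simp add: inner_diff_right)
    ultimately have yw: "y \<bullet> wv \<ge> c^2 / 2 * h" using yw0 by linarith
    have "c^2 / 2 * h > 0" using c hp by simp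
    hence yne: "y \<noteq> 0" using yw by auto
    define s where "s = y \<bullet> y"
    have sp: "s > 0" using yne by (simp add: s_def)
    have sr: "s \<le> \<rho>^2" using ny by (simp add: s_def power2_norm_eq_inner[symmetric] power_mono)
    have "s powr bb p \<ge> (\<rho>^2) powr bb p" using sp sr cc by (intro powr_mono2') auto
    also have "(\<rho>^2) powr bb p = (2 * c) powr (2 * bb p) * h powr (2 * bb p)"
    proof -
      have "\<rho>^2 = \<rho> powr 2" using powr_realpow[of \<rho> 2] \<rho>1 by simp
      hence "(\<rho>^2) powr bb p = \<rho> powr (2 * bb p)" by (simp only: powr_powr)
      also have "\<rho> powr (2 * bb p) = (2 * c) powr (2 * bb p) * h powr (2 * bb p)"
        unfolding \<rho>_def using c hp by (intro powr_mult)
      finally show ?thesis .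
    qed
    finally have sb: "s powr bb p \<ge> (2 * c) powr (2 * bb p) * h powr (2 * bb p)" .
    have "(k3 + s powr bb p) * (y \<bullet> wv) \<ge> s powr bb p * (c^2 / 2 * h)"
      using yw k c hp by (intro mult_mono) auto
    moreover have "s powr bb p * (c^2 / 2 * h) \<ge> ((2 * c) powr (2 * bb p) * h powr (2 * bb p)) * (c^2 / 2 * h)"
      using sb c hp by (intro mult_right_mono) auto
    moreover have "((2 * c) powr (2 * bb p) * h powr (2 * bb p)) * (c^2 / 2 * h) = L * h * h powr (2 * bb p)"
      by (simp add: L_def algebra_simps)
    ultimately have T2: "(k3 + s powr bb p) * (y \<bullet> wv) \<ge> L * h * h powr (2 * bb p)" by linarith
    have T1: "phi1 p k3 y \<bullet> phi1 p k3 y \<le> (2 * k3^2 + 3) * \<rho>"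
      using Y_small[OF p k(3) ny _ \<rho>1(1), of 0] \<rho>1 by simp
    have "wv \<bullet> wv - w t \<bullet> w t = (wv - w t) \<bullet> (wv + w t)"
      by (simp add: algebra_simps inner_commute)
    also have "\<dots> \<le> norm (wv - w t) * norm (wv + w t)" by (rule Cauchy_Schwarz_ineq2[THEN abs_le_D1])
    also have "norm (wv + w t) \<le> 2 * c + 1"
    proof -
      have e2: "wv + w t = (wv - w t) + 2 *\<^sub>R w t" by (simp add: algebra_simps scaleR_2)
      have "norm (wv + w t) \<le> norm (wv - w t) + norm (2 *\<^sub>R w t)"
        unfolding e2 by (rule norm_triangle_ineq)
      hence "norm (wv + w t) \<le> norm (wv - w t) + 2 * norm (w t)" by simp
      thus ?thesis using n2 hp h1 by (simp add: c_def h1_def)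
    qed
    hence "norm (wv - w t) * norm (wv + w t) \<le> h * (2 * c + 1)"
      using n2 hp by (intro mult_mono) auto
    finally have T3: "wv \<bullet> wv - w t \<bullet> w t \<le> h * (2 * c + 1)" by simp
    have Veq: "Vf p k1 k2 k3 (x (t+h)) = mm k1 k2 * (phi1 p k3 y \<bullet> phi1 p k3 y)
         - 2 * ((k3 + s powr bb p) * (y \<bullet> wv)) + PP k1 k2 * (wv \<bullet> wv)"
      by (simp add: xe Vf_def phi1_eq s_def)
    have "Vf p k1 k2 k3 (x (t+h)) - Vf p k1 k2 k3 (x t)
        \<le> mm k1 k2 * ((2 * k3^2 + 3) * \<rho>) - 2 * (L * h * h powr (2 * bb p)) + PP k1 k2 * (h * (2 * c + 1))"
    proof -
      have "mm k1 k2 * (phi1 p k3 y \<bullet> phi1 p k3 y) \<le> mm k1 k2 * ((2 * k3^2 + 3) * \<rho>)"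
        using T1 cc by (intro mult_left_mono) auto
      moreover have "PP k1 k2 * (wv \<bullet> wv - w t \<bullet> w t) \<le> PP k1 k2 * (h * (2 * c + 1))"
        using T3 cc by (intro mult_left_mono) auto
      ultimately show ?thesis using T2 unfolding Veq V0 by (simp add: algebra_simps)
    qed
    also have "\<dots> = h * (K - 2 * L * h powr (2 * bb p))"
      by (simp add: K_def \<rho>_def algebra_simps)
    finally have Q: "(Vf p k1 k2 k3 (x (t+h)) - Vf p k1 k2 k3 (x t)) / h \<le> K - 2 * L * h powr (2 * bb p)"
      using hp by (simp add: divide_le_eq mult.commute)
    have "\<bar>K - R\<bar> \<le> L * h powr (2 * bb p)" using elim L by (simp add: divide_le_eq mult.commute)
    moreover have "L * h powr (2 * bb p) \<ge> 0" using L by simp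
    ultimately show ?case using Q by linarith
  qed
qed

lemma dini_all:
  fixes x :: "real \<Rightarrow> (real^'n) \<times> (real^'n)"
  assumes p: "1 < p" "p < 2" and k: "k1 > 0" "k2 > 0" "k3 > 0"
    and sol: "is_solution (err_sys p k1 k2 k3) x" and t: "t \<ge> 0" and e: "\<epsilon> > 0"
  shows "eventually (\<lambda>h. (Vf p k1 k2 k3 (x (t+h)) - Vf p k1 k2 k3 (x t))/h
     \<le> - lam1 k1 k2 k3 * Vf p k1 k2 k3 (x t) - lam2 p k1 k2 * Vf p k1 k2 k3 (x t) powr (1/p) + \<epsilon>) (at_right 0)"
proof (cases "fst (x t) = 0")
  case True
  show ?thesis
  proof (cases "snd (x t) = 0")
    case True
    hence "x t = 0" using \<open>fst (x t) = 0\<close> by (simp add: prod_eq_iff)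
    thus ?thesis by (rule dini_E[OF p k sol t _ e])
  next
    case False
    thus ?thesis by (rule dini_D[OF p k sol t \<open>fst (x t) = 0\<close>])
  qed
next
  case False
  thus ?thesis by (rule dini_C[OF p k sol t _ e])
qed

lemma Vf_lower:
  fixes y :: "(real^'n) \<times> (real^'n)"
  assumes p: "1 < p" "p < 2" and k: "k1 > 0" "k2 > 0" "k3 > 0"
  shows "min (k3^2) 1 * (norm y)^2 \<le> Vf p k1 k2 k3 y"
proof -
  obtain u w where y: "y = (u, w)" by (cases y)
  note B = Vf_bounds[OF p k, of u w]
  have "(norm y)^2 = u \<bullet> u + w \<bullet> w" by (simp add: y norm_Pair power2_norm_eq_inner)
  moreover have "min (k3^2) 1 * (u \<bullet> u) \<le> k3^2 * (u \<bullet> u)" by (intro mult_right_mono) auto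
  moreover have "min (k3^2) 1 * (w \<bullet> w) \<le> 1 * (w \<bullet> w)" by (intro mult_right_mono) auto
  ultimately have "min (k3^2) 1 * (norm y)^2 \<le> k3^2 * (u \<bullet> u) + w \<bullet> w" by (simp add: algebra_simps)
  thus ?thesis using B(1,3) y by simp
qed

lemma Vf_pos:
  fixes y :: "(real^'n) \<times> (real^'n)"
  assumes p: "1 < p" "p < 2" and k: "k1 > 0" "k2 > 0" "k3 > 0" and "y \<noteq> 0"
  shows "Vf p k1 k2 k3 y > 0"
proof -
  have "min (k3^2) 1 > 0" using k by simp
  moreover have "(norm y)^2 > 0" using assms by simp
  ultimately show ?thesis using Vf_lower[OF p k, of y] by (smt (verit) mult_pos_pos)
qed

lemma Vf_zero: "Vf p k1 k2 k3 0 = 0"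
  by (simp add: Vf_def phi1_def)

lemma sol_facts:
  fixes x :: "real \<Rightarrow> (real^'n) \<times> (real^'n)"
  assumes p: "1 < p" "p < 2" and k: "k1 > 0" "k2 > 0" "k3 > 0"
    and sol: "is_solution (err_sys p k1 k2 k3) x"
  shows "\<And>s t. 0 \<le> s \<Longrightarrow> s \<le> t \<Longrightarrow> Vf p k1 k2 k3 (x t) \<le> Vf p k1 k2 k3 (x s)"
    and "\<And>t. Fset (lam1 k1 k2 k3) (lam2 p k1 k2) (1/p) (Vf p k1 k2 k3 (x 0)) \<le> t \<Longrightarrow> x t = 0"
proof -
  note c = consts_pos[OF p k]
  have cx: "continuous_on {0..} x"
  proof -
    have "continuous (at t within {0..}) x" if "t \<in> {0..}" for t
      using sol that unfolding is_solution_def by (auto intro: has_vector_derivative_continuous)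
    thus ?thesis by (simp add: continuous_on_eq_continuous_within)
  qed
  have cv: "continuous_on {0..} (\<lambda>t. Vf p k1 k2 k3 (x t))"
    by (rule continuous_on_compose2[OF cont_Vf[OF p k(3)] cx]) auto
  have nn: "\<And>t. t \<ge> 0 \<Longrightarrow> Vf p k1 k2 k3 (x t) \<ge> 0"
  proof -
    fix t
    have "min (k3^2) 1 * (norm (x t))^2 \<ge> 0" by simp
    thus "Vf p k1 k2 k3 (x t) \<ge> 0" using Vf_lower[OF p k, of "x t"] by linarith
  qed
  have D: "\<And>t \<epsilon>. t \<ge> 0 \<Longrightarrow> \<epsilon> > 0 \<Longrightarrow> eventually (\<lambda>h. (Vf p k1 k2 k3 (x (t+h)) - Vf p k1 k2 k3 (x t))/h
     \<le> - lam1 k1 k2 k3 * Vf p k1 k2 k3 (x t) - lam2 p k1 k2 * Vf p k1 k2 k3 (x t) powr (1/p) + \<epsilon>) (at_right 0)"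
    by (rule dini_all[OF p k sol])
  show "Vf p k1 k2 k3 (x t) \<le> Vf p k1 k2 k3 (x s)" if "0 \<le> s" "s \<le> t" for s t
    using settle_mono[of "lam1 k1 k2 k3" "lam2 p k1 k2" "1/p" "\<lambda>t. Vf p k1 k2 k3 (x t)" s t,
       OF c(11) c(12) c(13) c(14) cv nn D that] by simp
  show "x t = 0" if "Fset (lam1 k1 k2 k3) (lam2 p k1 k2) (1/p) (Vf p k1 k2 k3 (x 0)) \<le> t" for t
  proof -
    have "Vf p k1 k2 k3 (x t) = 0"
      using settle_zero[of "lam1 k1 k2 k3" "lam2 p k1 k2" "1/p" "\<lambda>t. Vf p k1 k2 k3 (x t)" t,
       OF c(11) c(12) c(13) c(14) cv nn D] that by simp
    thus ?thesis using Vf_pos[OF p k, of "x t"] by force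
  qed
qed

theorem theorem1:
  fixes p k1 k2 k3 :: real
  assumes "1 < p" and "p < 2" and "k3 > 0" and "k1 > 0" and "k2 > 0"
    and "hurwitz (vector [vector [- k1, 1], vector [- k2, 0]] :: real^2^2)"
  shows "ffts (err_sys p k1 k2 k3 :: (real^'n) \<times> (real^'n) \<Rightarrow> (real^'n) \<times> (real^'n))"
proof -
  have p: "1 < p" "p < 2" using assms by auto
  have k: "k1 > 0" "k2 > 0" "k3 > 0" using assms by auto
  note c = consts_pos[OF p k]
  let ?f = "err_sys p k1 k2 k3 :: (real^'n) \<times> (real^'n) \<Rightarrow> (real^'n) \<times> (real^'n)"
  let ?V = "Vf p k1 k2 k3 :: (real^'n) \<times> (real^'n) \<Rightarrow> real"
  have f0: "?f 0 = 0" by (simp add: err_sys_def phi1_def phi2_def zero_prod_def)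
  have stab: "lyapunov_stable ?f"
    unfolding lyapunov_stable_def
  proof (intro allI impI)
    fix \<epsilon> :: real assume e: "\<epsilon> > 0"
    define m where "m = min (k3^2) 1"
    have m: "m > 0" using k by (simp add: m_def)
    define \<eta> where "\<eta> = m * \<epsilon>^2"
    have \<eta>: "\<eta> > 0" using m e by (simp add: \<eta>_def)
    have "isCont ?V 0" using cont_Vf[OF p k(3), of k1 k2] continuous_on_eq_continuous_at[of UNIV ?V]
      by (metis UNIV_I open_UNIV)
    then obtain \<delta> where \<delta>: "\<delta> > 0" and \<delta>P: "\<And>y. dist y 0 < \<delta> \<Longrightarrow> dist (?V y) (?V 0) < \<eta>"
      using \<eta> unfolding continuous_at_eps_delta by blast
    show "\<exists>\<delta>>0. \<forall>x. is_solution ?f x \<and> norm (x 0) < \<delta> \<longrightarrow> (\<forall>t\<ge>0. norm (x t) < \<epsilon>)"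
    proof (intro exI[of _ \<delta>] conjI allI impI \<delta>)
      fix x :: "real \<Rightarrow> (real^'n) \<times> (real^'n)" and t :: real
      assume a: "is_solution ?f x \<and> norm (x 0) < \<delta>" and t: "0 \<le> t"
      have "?V (x 0) < \<eta>" using \<delta>P[of "x 0"] a by (simp add: Vf_zero dist_norm)
      moreover have "?V (x t) \<le> ?V (x 0)" using sol_facts(1)[OF p k _ _ t] a by auto
      moreover have "m * (norm (x t))^2 \<le> ?V (x t)" using Vf_lower[OF p k] by (simp add: m_def)
      ultimately have "m * (norm (x t))^2 < m * \<epsilon>^2" by (simp add: \<eta>_def)
      hence "(norm (x t))^2 < \<epsilon>^2" using m by simp
      thus "norm (x t) < \<epsilon>" using e by (simp add: power_less_imp_less_base)
    qed
  qed
  show ?thesis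
    unfolding ffts_def
  proof (intro conjI f0 stab, rule exI[of _ 1], rule conjI[OF zero_less_one], rule exI[of _ ?V],
      rule exI[of _ "lam1 k1 k2 k3"], rule exI[of _ "lam2 p k1 k2"], rule exI[of _ "1/p"],
      intro conjI c(11) c(12) c(13) c(14) ballI impI allI)
    show "continuous_on (ball 0 1) ?V" using cont_Vf[OF p k(3), of k1 k2] by (rule continuous_on_subset) auto
    show "?V 0 = 0" by (rule Vf_zero)
    show "?V z > 0" if "z \<noteq> 0" for z using Vf_pos[OF p k that] .
  next
    fix x :: "real \<Rightarrow> (real^'n) \<times> (real^'n)" and t \<epsilon> :: real
    assume a: "is_solution ?f x \<and> x 0 \<in> ball 0 1" and t: "0 \<le> t" and e: "0 < \<epsilon>"
    hence sol: "is_solution ?f x" by simp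
    show "eventually (\<lambda>h. (?V (x (t + h)) - ?V (x t)) / h
        \<le> - lam1 k1 k2 k3 * ?V (x t) - lam2 p k1 k2 * ?V (x t) powr (1/p) + \<epsilon>) (at_right 0)"
      using dini_all[OF p k sol t e] by simp
  next
    fix x :: "real \<Rightarrow> (real^'n) \<times> (real^'n)"
    assume a: "is_solution ?f x \<and> x 0 \<in> ball 0 1"
    hence sol: "is_solution ?f x" by simp
    define T where "T = Fset (lam1 k1 k2 k3) (lam2 p k1 k2) (1/p) (?V (x 0))"
    have V0: "?V (x 0) \<ge> 0"
    proof -
      have "min (k3^2) 1 * (norm (x 0))^2 \<ge> 0" by simp
      thus ?thesis using Vf_lower[OF p k, of "x 0"] by linarith
    qed
    show "\<exists>T\<ge>0. T \<le> 1 / (lam1 k1 k2 k3 * (1 - 1/p)) * ln ((lam1 k1 k2 k3 * ?V (x 0) powr (1 - 1/p) + lam2 p k1 k2) / lam2 p k1 k2)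
        \<and> (\<forall>t\<ge>T. x t = 0)"
    proof (intro exI[of _ T] conjI allI impI)
      show "T \<ge> 0" unfolding T_def using Fset_nonneg c V0 by auto
      show "T \<le> 1 / (lam1 k1 k2 k3 * (1 - 1/p)) * ln ((lam1 k1 k2 k3 * ?V (x 0) powr (1 - 1/p) + lam2 p k1 k2) / lam2 p k1 k2)"
        by (simp add: T_def Fset_def)
      show "x t = 0" if "T \<le> t" for t using sol_facts(2)[OF p k sol] that by (simp add: T_def)
    qed
  qed
qed


end
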